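(* Let $\Gamma$ be a weighted digraph with vertex set $\{1,\dots,n\}$, $n>1$, without loops and with strictly positive arc weights, with Laplacian matrix $L$, in-forest dimension $d$, and let $\tilde J=\sigma_{n-d}^{-1}Q_{n-d}$. Then $\tilde J=I-LL^{\#}$, where $L^{\#}$ is the group inverse of $L$.
   Context: $W=(w_{ij})$ is the matrix of arc weights ($w_{ij}>0$ iff there is an arc $i\to j$, else $0$). The Laplacian $L=(\ell_{ij})$: $\ell_{ij}=-w_{ij}$ for $j\ne i$, $\ell_{ii}=\sum_{k\ne i}w_{ik}$. The weight of a subgraph is the product of its arc weights (1 if no arcs); the weight of a set of subgraphs is the sum of their weights. A converging tree is a weakly connected digraph with one vertex (the root) of outdegree 0 and all others of outdegree 1; an in-forest is a spanning subgraph of $\Gamma$ whose weak components are converging trees. The in-forest dimension $d$ is the minimal number of trees in an in-forest (so in-forests have at most $n-d$ arcs). $\sigma_k$ is the total weight of in-forests with $k$ arcs; $Q_k=(q^k_{ij})$ with $q^k_{ij}$ the total weight of in-forests with $k$ arcs in which $i$ lies in a tree rooted at $j$. For a square matrix $A$ of index at most 1 (the index being the least $k\ge0$ with $\operatorname{rank}A^{k+1}=\operatorname{rank}A^k$), the group inverse $A^{\#}$ is the unique matrix $X$ with $AXA=A$, $XAX=X$, $AX=XA$. *)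

theory Defs
  imports "HOL-Analysis.Analysis"
begin

text \<open>Weighted digraph on the finite vertex type 'v, given by its weight matrix
  w :: 'v => 'v => real; there is an arc i -> j iff w i j > 0.\<close>

definition arcs :: "('v \<Rightarrow> 'v \<Rightarrow> real) \<Rightarrow> ('v \<times> 'v) set" where
  "arcs w = {(i, j). w i j > 0}"

definition laplacian :: "('v::finite \<Rightarrow> 'v \<Rightarrow> real) \<Rightarrow> real^'v^'v" where
  "laplacian w = (\<chi> i j. if i = j then (\<Sum>k\<in>UNIV - {i}. w i k) else - w i j)"

text \<open>Spanning subgraphs are given by their arc sets F (vertex set is all of 'v).\<close>

definition outdeg :: "('v \<times> 'v) set \<Rightarrow> 'v \<Rightarrow> nat" where
  "outdeg F v = card {j. (v, j) \<in> F}"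

definition weak_rel :: "('v \<times> 'v) set \<Rightarrow> ('v \<times> 'v) set" where
  "weak_rel F = (F \<union> F\<inverse>)\<^sup>*"

definition weak_components :: "('v \<times> 'v) set \<Rightarrow> 'v set set" where
  "weak_components F = UNIV // weak_rel F"

definition is_converging_tree_comp :: "('v \<times> 'v) set \<Rightarrow> 'v set \<Rightarrow> bool" where
  "is_converging_tree_comp F C \<longleftrightarrow>
     (\<exists>!r. r \<in> C \<and> outdeg F r = 0 \<and> (\<forall>v\<in>C. v \<noteq> r \<longrightarrow> outdeg F v = 1))"

definition in_forest :: "('v \<Rightarrow> 'v \<Rightarrow> real) \<Rightarrow> ('v \<times> 'v) set \<Rightarrow> bool" where
  "in_forest w F \<longleftrightarrow> F \<subseteq> arcs w \<and>
     (\<forall>C\<in>weak_components F. is_converging_tree_comp F C)"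

definition in_forest_dim :: "('v \<Rightarrow> 'v \<Rightarrow> real) \<Rightarrow> nat" where
  "in_forest_dim w = Min {card (weak_components F) | F. in_forest w F}"

definition sg_weight :: "('v \<Rightarrow> 'v \<Rightarrow> real) \<Rightarrow> ('v \<times> 'v) set \<Rightarrow> real" where
  "sg_weight w F = (\<Prod>(i, j)\<in>F. w i j)"

definition in_tree_rooted_at :: "('v \<times> 'v) set \<Rightarrow> 'v \<Rightarrow> 'v \<Rightarrow> bool" where
  "in_tree_rooted_at F i j \<longleftrightarrow> (i, j) \<in> weak_rel F \<and> outdeg F j = 0"

definition sigma_k :: "('v \<Rightarrow> 'v \<Rightarrow> real) \<Rightarrow> nat \<Rightarrow> real" where
  "sigma_k w k = (\<Sum>F\<in>{F. in_forest w F \<and> card F = k}. sg_weight w F)"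

definition Q_k :: "('v::finite \<Rightarrow> 'v \<Rightarrow> real) \<Rightarrow> nat \<Rightarrow> real^'v^'v" where
  "Q_k w k = (\<chi> i j. \<Sum>F\<in>{F. in_forest w F \<and> card F = k \<and> in_tree_rooted_at F i j}. sg_weight w F)"

definition is_group_inverse :: "real^'n^'n \<Rightarrow> real^'n^'n \<Rightarrow> bool" where
  "is_group_inverse A X \<longleftrightarrow> A ** X ** A = A \<and> X ** A ** X = X \<and> A ** X = X ** A"

end

theory Submission
  imports Defs
begin


lemma mm_add_r: "((A::real^'n^'n) + B) ** C = A ** C + B ** C"
  by (simp add: matrix_matrix_mult_def vec_eq_iff sum.distrib algebra_simps)
lemma mm_diff_l: "(A::real^'n^'n) ** (B - C) = A ** B - A ** C"
  by (simp add: matrix_matrix_mult_def vec_eq_iff sum_subtractf algebra_simps)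
lemma mm_diff_r: "((A::real^'n^'n) - B) ** C = A ** C - B ** C"
  by (simp add: matrix_matrix_mult_def vec_eq_iff sum_subtractf algebra_simps)

lemma abstract_ginv:
  fixes L J :: "real^'n^'n"
  assumes LJ: "L ** J = 0" and JL: "J ** L = 0"
    and fx: "\<And>y. L *v y = 0 \<Longrightarrow> J *v y = y"
  shows "(\<exists>X. is_group_inverse L X) \<and> (\<forall>X. is_group_inverse L X \<longrightarrow> J = mat 1 - L ** X)"
proof -
  have JJ: "J ** J = J"
  proof (subst matrix_eq, intro allI)
    fix x
    have "L *v (J *v x) = 0" by (simp add: matrix_vector_mul_assoc LJ)
    then show "(J ** J) *v x = J *v x" using fx by (simp add: matrix_vector_mul_assoc[symmetric])
  qed
  define M where "M = L + J"
  have ker: "x = 0" if "M *v x = 0" for x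
  proof -
    have "J *v (M *v x) = J *v x"
      by (simp add: M_def matrix_vector_mul_assoc matrix_add_ldistrib JL JJ)
    then have Jx: "J *v x = 0" using that by simp
    then have "L *v x = 0" using that by (simp add: M_def matrix_vector_mult_add_rdistrib)
    then show ?thesis using fx Jx by metis
  qed
  then obtain B where BM: "B ** M = mat 1" using matrix_left_invertible_ker by blast
  then have MB: "M ** B = mat 1" using matrix_left_right_inverse by blast
  have JM: "J ** M = J" by (simp add: M_def matrix_add_ldistrib JL JJ)
  have MJ: "M ** J = J" by (simp add: M_def mm_add_r LJ JJ)
  have JB: "J ** B = J" by (metis JM MB matrix_mul_assoc matrix_mul_rid)
  have BJ: "B ** J = J" by (metis MJ BM matrix_mul_assoc matrix_mul_lid)
  have LM: "L = M - J" by (simp add: M_def)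
  have LB: "L ** B = mat 1 - J" by (simp add: LM mm_diff_r MB JB)
  have BL: "B ** L = mat 1 - J" by (simp add: LM mm_diff_l BM BJ)
  have ex: "is_group_inverse L (B - J)"
    unfolding is_group_inverse_def
    by (simp add: mm_diff_l mm_diff_r LB BL LJ JL JJ JB BJ matrix_mul_assoc[symmetric])
  have uni: "J = mat 1 - L ** X" if X: "is_group_inverse L X" for X
  proof -
    from X have 1: "L ** X ** L = L" and 2: "L ** X = X ** L" unfolding is_group_inverse_def by auto
    have PJ: "L ** X ** J = 0" using 2 by (simp add: matrix_mul_assoc[symmetric] LJ)
    have "(mat 1 - L ** X - J) ** M = 0"
      by (simp add: M_def mm_diff_r matrix_add_ldistrib 1 PJ JL JJ)
    then have "(mat 1 - L ** X - J) ** M ** B = 0" by simp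
    then have "mat 1 - L ** X - J = 0" by (simp add: matrix_mul_assoc[symmetric] MB)
    then show ?thesis by (simp add: algebra_simps)
  qed
  show ?thesis using ex uni by blast
qed


lemma lap_row:
  assumes "\<forall>i. w i i = 0"
  shows "(laplacian w *v x) $ i = (\<Sum>k\<in>UNIV. w i k * (x$i - x$k))"
proof -
  have "(laplacian w *v x) $ i = (\<Sum>k\<in>UNIV. laplacian w $ i $ k * x$k)"
    by (simp add: matrix_vector_mult_def)
  also have "\<dots> = laplacian w $ i $ i * x$i + (\<Sum>k\<in>UNIV-{i}. laplacian w $ i $ k * x$k)"
    by (simp add: sum.remove)
  also have "\<dots> = (\<Sum>k\<in>UNIV-{i}. w i k) * x$i - (\<Sum>k\<in>UNIV-{i}. w i k * x$k)"
    by (simp add: laplacian_def sum_negf)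
  also have "\<dots> = (\<Sum>k\<in>UNIV-{i}. w i k * (x$i - x$k))"
    by (simp add: sum_distrib_left sum_distrib_right sum_subtractf algebra_simps)
  also have "\<dots> = (\<Sum>k\<in>UNIV. w i k * (x$i - x$k))"
    by (simp add: sum.remove[of UNIV i] assms)
  finally show ?thesis .
qed

lemma maxp:
  fixes x :: "'v::finite \<Rightarrow> real"
  assumes w0: "\<forall>i j. w i j \<ge> 0"
    and harm: "\<forall>u. (\<Sum>k\<in>UNIV. w u k * (x u - x k)) = 0"
    and le: "\<forall>v. (a,v) \<in> (arcs w)\<^sup>* \<longrightarrow> x v \<le> x a"
    and av: "(a,v) \<in> (arcs w)\<^sup>*"
  shows "x v = x a"
  using av
proof (induction rule: rtrancl_induct)
  case base then show ?case by simp
next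
  case (step u v)
  have nn: "\<forall>k\<in>UNIV. w u k * (x u - x k) \<ge> 0"
  proof
    fix k
    show "w u k * (x u - x k) \<ge> 0"
    proof (cases "w u k > 0")
      case True
      then have "(u,k) \<in> arcs w" by (simp add: arcs_def)
      then have "(a,k) \<in> (arcs w)\<^sup>*" using step.hyps(1) by simp
      then have "x k \<le> x u" using le step.IH by auto
      then show ?thesis using True by simp
    next
      case False
      then have "w u k = 0" using w0 by (meson not_less order_antisym)
      then show ?thesis by simp
    qed
  qed
  have "w u v * (x u - x v) = 0"
    using sum_nonneg_eq_0_iff[of UNIV "\<lambda>k. w u k * (x u - x k)"] nn harm by simp
  moreover have "w u v > 0" using step.hyps(2) by (simp add: arcs_def)
  ultimately show ?case using step.IH by simp
qed

lemma fix_half: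
  fixes J :: "real^'v::finite^'v"
  assumes w0: "\<forall>i j. w i j \<ge> 0" and wii: "\<forall>i. w i i = 0"
    and LJ: "laplacian w ** J = 0"
    and rows: "\<forall>i. (\<Sum>j\<in>UNIV. J$i$j) = 1"
    and supp: "\<forall>i j. J$i$j \<noteq> 0 \<longrightarrow> (i,j) \<in> (arcs w)\<^sup>*"
    and Ly: "laplacian w *v y = 0"
  shows "y$i - (J *v y)$i \<le> 0"
proof -
  define z where "z = y - J *v y"
  have Lz: "laplacian w *v z = 0"
    by (simp add: z_def matrix_vector_mult_diff_distrib Ly matrix_vector_mul_assoc LJ)
  have hz: "\<forall>u. (\<Sum>k\<in>UNIV. w u k * ((\<lambda>v. z$v) u - (\<lambda>v. z$v) k)) = 0"
  proof
    fix u show "(\<Sum>k\<in>UNIV. w u k * ((\<lambda>v. z$v) u - (\<lambda>v. z$v) k)) = 0"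
      using lap_row[where w=w, OF wii, of z u] Lz by simp
  qed
  have hy: "\<forall>u. (\<Sum>k\<in>UNIV. w u k * ((\<lambda>v. y$v) u - (\<lambda>v. y$v) k)) = 0"
  proof
    fix u show "(\<Sum>k\<in>UNIV. w u k * ((\<lambda>v. y$v) u - (\<lambda>v. y$v) k)) = 0"
      using lap_row[where w=w, OF wii, of y u] Ly by simp
  qed
  have "Max (range (\<lambda>v. z$v)) \<in> range (\<lambda>v. z$v)" by (rule Max_in) auto
  then obtain a where a0: "Max (range (\<lambda>v. z$v)) = z$a" by blast
  note a = a0[symmetric]
  have amax: "\<forall>v. z$v \<le> z$a" by (simp add: a)
  define R where "R = {v. (a,v) \<in> (arcs w)\<^sup>*}"
  have "a \<in> R" by (simp add: R_def)
  then have "Max ((\<lambda>v. y$v) ` R) \<in> (\<lambda>v. y$v) ` R" by (intro Max_in) auto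
  then obtain b where b: "b \<in> R" "y$b = Max ((\<lambda>v. y$v) ` R)" by (metis imageE)
  have bR: "(b,v) \<in> (arcs w)\<^sup>* \<Longrightarrow> v \<in> R" for v
    using b(1) by (auto simp: R_def)
  have ble: "\<forall>v. (b,v) \<in> (arcs w)\<^sup>* \<longrightarrow> y$v \<le> y$b"
    using bR b(2) by auto
  have yconst: "(b,v) \<in> (arcs w)\<^sup>* \<Longrightarrow> y$v = y$b" for v
    using maxp[OF w0 hy, of b v] ble by auto
  have "(J *v y)$b = (\<Sum>j\<in>UNIV. J$b$j * y$j)" by (simp add: matrix_vector_mult_def)
  also have "\<dots> = (\<Sum>j\<in>UNIV. J$b$j * y$b)"
  proof (rule sum.cong)
    fix j
    show "J$b$j * y$j = J$b$j * y$b"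
    proof (cases "J$b$j = 0")
      case False
      then have "(b,j) \<in> (arcs w)\<^sup>*" using supp by blast
      then show ?thesis using yconst[of j] by simp
    qed simp
  qed simp
  also have "\<dots> = (\<Sum>j\<in>UNIV. J$b$j) * y$b" by (simp add: sum_distrib_right)
  also have "\<dots> = y$b" using rows by simp
  finally have "(J *v y)$b = y$b" .
  then have zb: "z$b = 0" by (simp add: z_def)
  have "z$b = z$a"
    using maxp[OF w0 hz, of a b] amax b(1) by (simp add: R_def)
  then have "z$i \<le> 0" using amax[rule_format, of i] zb by simp
  then show ?thesis by (simp add: z_def)
qed

lemma mv_neg: "(A::real^'n^'m) *v (-x) = -(A *v x)"
  by (simp add: matrix_vector_mult_def vec_eq_iff sum_negf)

lemma fixJ:
  fixes J :: "real^'v::finite^'v"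
  assumes w0: "\<forall>i j. w i j \<ge> 0" and wii: "\<forall>i. w i i = 0"
    and LJ: "laplacian w ** J = 0"
    and rows: "\<forall>i. (\<Sum>j\<in>UNIV. J$i$j) = 1"
    and supp: "\<forall>i j. J$i$j \<noteq> 0 \<longrightarrow> (i,j) \<in> (arcs w)\<^sup>*"
    and Ly: "laplacian w *v y = 0"
  shows "J *v y = y"
proof -
  have Lm: "laplacian w *v (-y) = 0"
    using Ly by (simp add: mv_neg)
  have "y$i = (J *v y)$i" for i
  proof -
    have "y$i - (J *v y)$i \<le> 0" by (rule fix_half[OF w0 wii LJ rows supp Ly])
    moreover have "(-y)$i - (J *v (-y))$i \<le> 0" by (rule fix_half[OF w0 wii LJ rows supp Lm])
    moreover have "J *v (-y) = - (J *v y)"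
      by (rule mv_neg)
    ultimately show ?thesis by simp
  qed
  then show ?thesis by (simp add: vec_eq_iff)
qed


definition functional :: "('v \<times> 'v) set \<Rightarrow> bool" where
  "functional F \<longleftrightarrow> (\<forall>a b c. (a,b)\<in>F \<longrightarrow> (a,c)\<in>F \<longrightarrow> b = c)"
definition forest :: "('v \<times> 'v) set \<Rightarrow> bool" where
  "forest F \<longleftrightarrow> functional F \<and> acyclic F"
definition isroot :: "('v \<times> 'v) set \<Rightarrow> 'v \<Rightarrow> bool" where
  "isroot F v \<longleftrightarrow> (\<forall>u. (v,u) \<notin> F)"
definition Fo :: "'v \<Rightarrow> ('v \<times> 'v) set \<Rightarrow> ('v \<times> 'v) set" where
  "Fo k F = {e\<in>F. fst e \<noteq> k}"

lemma det:
  assumes fn: "functional F" and ka: "(k,a) \<in> F\<^sup>*"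
  shows "(k,b) \<in> F\<^sup>* \<Longrightarrow> (a,b) \<in> F\<^sup>* \<or> (b,a) \<in> F\<^sup>*"
  using ka
proof (induction arbitrary: b rule: converse_rtrancl_induct)
  case base then show ?case by simp
next
  case (step k k')
  note IH = step.IH and hk = step.hyps(1)
  from step.prems show ?case
  proof (cases rule: converse_rtranclE)
    case base
    then have "(b,a) \<in> F\<^sup>*" using step.hyps by (meson converse_rtrancl_into_rtrancl)
    then show ?thesis by blast
  next
    case (step k'')
    then have "k'' = k'" using fn hk unfolding functional_def by blast
    then show ?thesis using IH step by blast
  qed
qed

lemma root_rtr: "isroot F r \<Longrightarrow> (r,c) \<in> F\<^sup>* \<Longrightarrow> c = r"
  by (metis converse_rtranclE isroot_def)

lemma root_uniq:
  assumes "functional F" "(i,r1) \<in> F\<^sup>*" "isroot F r1" "(i,r2) \<in> F\<^sup>*" "isroot F r2"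
  shows "r1 = r2"
  using det[OF assms(1,2,4)] root_rtr assms(3,5) by metis

lemma conf:
  assumes fn: "functional F"
  shows "(u,v) \<in> (F \<union> F\<inverse>)\<^sup>* \<Longrightarrow> \<exists>c. (u,c) \<in> F\<^sup>* \<and> (v,c) \<in> F\<^sup>*"
proof (induction rule: rtrancl_induct)
  case base then show ?case by blast
next
  case (step v v')
  then obtain c where c: "(u,c) \<in> F\<^sup>*" "(v,c) \<in> F\<^sup>*" by blast
  show ?case
  proof (cases "(v,v') \<in> F")
    case True
    show ?thesis
    proof (cases "v = c")
      case True
      then show ?thesis using c \<open>(v,v') \<in> F\<close> by (meson rtrancl.rtrancl_into_rtrancl rtrancl.rtrancl_refl)
    next
      case False
      then have "(v,c) \<in> F\<^sup>+" using c(2) by (meson rtranclD)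
      then obtain x where "(v,x) \<in> F" "(x,c) \<in> F\<^sup>*" by (meson tranclD)
      then have "x = v'" using fn True unfolding functional_def by blast
      then show ?thesis using c \<open>(x,c) \<in> F\<^sup>*\<close> by blast
    qed
  next
    case False
    then have "(v',v) \<in> F" using step.hyps(2) by auto
    then show ?thesis using c by (meson converse_rtrancl_into_rtrancl)
  qed
qed

lemma exroot:
  assumes "finite F" "acyclic F"
  shows "\<exists>r. (v,r) \<in> F\<^sup>* \<and> isroot F r"
proof -
  have wf: "wf (F\<inverse>)" using finite_acyclic_wf_converse assms by blast
  show ?thesis
  proof (induction v rule: wf_induct[OF wf])
    case (1 v)
    show ?case
    proof (cases "isroot F v")
      case True then show ?thesis by blast
    next
      case False
      then obtain u where "(v,u) \<in> F" by (auto simp: isroot_def)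
      then have "(u,v) \<in> F\<inverse>" by simp
      with 1 obtain r where "(u,r) \<in> F\<^sup>*" "isroot F r" by blast
      then show ?thesis using \<open>(v,u) \<in> F\<close> by (meson converse_rtrancl_into_rtrancl)
    qed
  qed
qed

lemma avoid1: "(x,i) \<in> R\<^sup>* \<Longrightarrow> (x,i) \<in> (Fo i R)\<^sup>*"
proof (induction rule: converse_rtrancl_induct)
  case base then show ?case by simp
next
  case (step x x')
  show ?case
  proof (cases "x = i")
    case True then show ?thesis by simp
  next
    case False
    then have "(x,x') \<in> Fo i R" using step.hyps by (simp add: Fo_def)
    then show ?thesis using step.IH by (meson converse_rtrancl_into_rtrancl)
  qed
qed

lemma avoid2: "(x,y) \<in> R\<^sup>* \<Longrightarrow> (x,i) \<notin> R\<^sup>* \<Longrightarrow> (x,y) \<in> (Fo i R)\<^sup>*"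
proof (induction rule: converse_rtrancl_induct)
  case base then show ?case by simp
next
  case (step x x')
  have "x \<noteq> i" using step.prems by auto
  then have "(x,x') \<in> Fo i R" using step.hyps by (simp add: Fo_def)
  moreover have "(x',i) \<notin> R\<^sup>*" using step.prems step.hyps(1) by (meson converse_rtrancl_into_rtrancl)
  ultimately show ?case using step.IH by (meson converse_rtrancl_into_rtrancl)
qed

lemma Lpath:
  assumes fn: "functional R"
  shows "(x,y) \<in> (Fo k R)\<^sup>* \<Longrightarrow> (x,k) \<in> R\<^sup>* \<Longrightarrow> (y,k) \<in> R\<^sup>*"
proof (induction rule: rtrancl_induct)
  case base then show ?case by simp
next
  case (step y z)
  then have yk: "(y,k) \<in> R\<^sup>*" by simp
  have "y \<noteq> k" "(y,z) \<in> R" using step.hyps(2) by (auto simp: Fo_def)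
  then have "(y,k) \<in> R\<^sup>+" using yk by (meson rtranclD)
  then obtain z' where "(y,z') \<in> R" "(z',k) \<in> R\<^sup>*" by (meson tranclD)
  then show ?case using fn \<open>(y,z) \<in> R\<close> unfolding functional_def by blast
qed

lemma Fo_sub: "Fo k F \<subseteq> F" by (auto simp: Fo_def)

lemma functional_subset: "functional F \<Longrightarrow> G \<subseteq> F \<Longrightarrow> functional G"
  unfolding functional_def by blast

lemma forest_subset: "forest F \<Longrightarrow> G \<subseteq> F \<Longrightarrow> forest G"
  unfolding forest_def using functional_subset acyclic_subset by blast

lemma forest_insert:
  assumes "forest F" "isroot F a" "(b,a) \<notin> F\<^sup>*"
  shows "forest (insert (a,b) F)"
proof -
  have "functional (insert (a,b) F)"
    using assms(1,2) unfolding forest_def functional_def isroot_def by blast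
  moreover have "acyclic (insert (a,b) F)"
    using assms(1,3) unfolding forest_def by (simp add: acyclic_insert)
  ultimately show ?thesis by (simp add: forest_def)
qed

lemma isroot_Fo: "isroot (Fo k F) k" by (simp add: isroot_def Fo_def)


lemma outdeg0: "outdeg F (v::'v::finite) = 0 \<longleftrightarrow> isroot F v"
  by (simp add: outdeg_def isroot_def)

lemma outdeg_le1: "functional F \<Longrightarrow> outdeg F (v::'v::finite) \<le> 1"
proof -
  assume fn: "functional F"
  have "card {j. (v,j) \<in> F} \<le> Suc 0"
    by (subst card_le_Suc0_iff_eq) (use fn in \<open>auto simp: functional_def\<close>)
  then show ?thesis by (simp add: outdeg_def)
qed

lemma weak_equiv: "equiv UNIV (weak_rel F)"
  unfolding weak_rel_def by (intro equivI refl_rtrancl sym_rtrancl sym_Un_converse trans_rtrancl) auto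

lemma weak_sym: "(a,b) \<in> weak_rel F \<Longrightarrow> (b,a) \<in> weak_rel F"
  using weak_equiv[of F] unfolding equiv_def sym_def by blast

lemma weak_trans: "(a,b) \<in> weak_rel F \<Longrightarrow> (b,c) \<in> weak_rel F \<Longrightarrow> (a,c) \<in> weak_rel F"
  using weak_equiv[of F] unfolding equiv_def trans_def by blast

lemma rtr_weak: "(a,b) \<in> F\<^sup>* \<Longrightarrow> (a,b) \<in> weak_rel F"
  unfolding weak_rel_def by (meson in_rtrancl_UnI)

lemma same_comp_roots:
  assumes "functional F" "(u,v) \<in> weak_rel F" "isroot F u" "isroot F v"
  shows "u = v"
proof -
  obtain c where "(u,c) \<in> F\<^sup>*" "(v,c) \<in> F\<^sup>*" using conf[OF assms(1)] assms(2) unfolding weak_rel_def by blast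
  then show ?thesis using root_rtr assms(3,4) by metis
qed

lemma comp_rel: "C \<in> weak_components F \<Longrightarrow> u \<in> C \<Longrightarrow> v \<in> C \<Longrightarrow> (u,v) \<in> weak_rel F"
proof -
  assume C: "C \<in> weak_components F" and u: "u \<in> C" and v: "v \<in> C"
  obtain x where x: "C = weak_rel F `` {x}" using C unfolding weak_components_def by (auto elim: quotientE)
  have "(x,u) \<in> weak_rel F" "(x,v) \<in> weak_rel F" using x u v by auto
  then show ?thesis using weak_sym weak_trans by metis
qed

lemma forest_comp:
  fixes F :: "('v::finite \<times> 'v) set"
  assumes fo: "forest F" and C: "C \<in> weak_components F"
  shows "is_converging_tree_comp F C"
proof -
  have fn: "functional F" and ac: "acyclic F" using fo by (auto simp: forest_def)
  obtain x where x: "C = weak_rel F `` {x}" using C unfolding weak_components_def by (auto elim: quotientE)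
  obtain r where r: "(x,r) \<in> F\<^sup>*" "isroot F r" using exroot[OF _ ac] by auto
  have rC: "r \<in> C" using x rtr_weak[OF r(1)] by simp
  have uniq: "v = r" if "v \<in> C" "isroot F v" for v
    using same_comp_roots[OF fn comp_rel[OF C that(1) rC] that(2) r(2)] .
  have P: "r \<in> C \<and> outdeg F r = 0 \<and> (\<forall>v\<in>C. v \<noteq> r \<longrightarrow> outdeg F v = 1)"
  proof (intro conjI ballI impI)
    show "r \<in> C" by (rule rC)
    show "outdeg F r = 0" using r(2) by (simp add: outdeg0)
    fix v assume "v \<in> C" "v \<noteq> r"
    then have "outdeg F v \<noteq> 0" using uniq by (auto simp: outdeg0)
    then show "outdeg F v = 1" using outdeg_le1[OF fn, of v] by linarith
  qed
  show ?thesis unfolding is_converging_tree_comp_def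
  proof (rule ex1I[of _ r])
    show "r \<in> C \<and> outdeg F r = 0 \<and> (\<forall>v\<in>C. v \<noteq> r \<longrightarrow> outdeg F v = 1)" by (rule P)
    fix r' assume "r' \<in> C \<and> outdeg F r' = 0 \<and> (\<forall>v\<in>C. v \<noteq> r' \<longrightarrow> outdeg F v = 1)"
    then show "r' = r" using uniq by (auto simp: outdeg0)
  qed
qed

lemma in_forest_forest:
  fixes F :: "('v::finite \<times> 'v) set"
  assumes "in_forest w F"
  shows "forest F"
proof -
  have comps: "\<forall>C\<in>weak_components F. is_converging_tree_comp F C"
    using assms by (simp add: in_forest_def)
  have cls: "weak_rel F `` {v} \<in> weak_components F" for v
    unfolding weak_components_def by (rule quotientI) simp
  have vin: "v \<in> weak_rel F `` {v}" for v
    using weak_equiv by (metis UNIV_I equiv_class_self)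
  have le1: "outdeg F v \<le> 1" for v
  proof -
    obtain r where "r \<in> weak_rel F `` {v}" "outdeg F r = 0"
      "\<forall>u\<in>weak_rel F `` {v}. u \<noteq> r \<longrightarrow> outdeg F u = 1"
      using comps cls[of v] unfolding is_converging_tree_comp_def by blast
    then show ?thesis using vin[of v] by (cases "v = r") auto
  qed
  have fn: "functional F"
    unfolding functional_def
  proof (intro allI impI)
    fix a b c assume "(a,b) \<in> F" "(a,c) \<in> F"
    have "card {j. (a,j) \<in> F} \<le> Suc 0" using le1[of a] by (simp add: outdeg_def)
    then show "b = c" using \<open>(a,b) \<in> F\<close> \<open>(a,c) \<in> F\<close>
      by (subst (asm) card_le_Suc0_iff_eq) auto
  qed
  define S where "S = {u. \<exists>c. (c,c) \<in> F\<^sup>+ \<and> (u,c) \<in> F\<^sup>*}"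
  have clos: "(u,v) \<in> (F \<union> F\<inverse>)\<^sup>* \<Longrightarrow> u \<in> S \<Longrightarrow> v \<in> S" for u v
  proof (induction rule: rtrancl_induct)
    case base then show ?case .
  next
    case (step v v')
    then obtain c where c: "(c,c) \<in> F\<^sup>+" "(v,c) \<in> F\<^sup>*" by (auto simp: S_def)
    show ?case
    proof (cases "(v,v') \<in> F")
      case True
      have "(v,c) \<in> F\<^sup>+"
        using c by (metis rtranclD)
      then obtain x where "(v,x) \<in> F" "(x,c) \<in> F\<^sup>*" by (meson tranclD)
      then have "x = v'" using fn True unfolding functional_def by blast
      then show ?thesis using c \<open>(x,c) \<in> F\<^sup>*\<close> by (auto simp: S_def)
    next
      case False
      then have "(v',v) \<in> F" using step.hyps(2) by auto
      then show ?thesis using c by (auto simp: S_def intro: converse_rtrancl_into_rtrancl)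
    qed
  qed
  have ac: "acyclic F"
  proof (rule acyclicI, rule allI, rule notI)
    fix x assume xx: "(x,x) \<in> F\<^sup>+"
    obtain r where r: "r \<in> weak_rel F `` {x}" "outdeg F r = 0"
      using comps cls[of x] unfolding is_converging_tree_comp_def by blast
    have "x \<in> S" using xx by (auto simp: S_def)
    moreover have "(x,r) \<in> (F \<union> F\<inverse>)\<^sup>*" using r(1) by (simp add: weak_rel_def)
    ultimately have "r \<in> S" using clos by blast
    then obtain c where c: "(c,c) \<in> F\<^sup>+" "(r,c) \<in> F\<^sup>*" by (auto simp: S_def)
    have "isroot F r" using r(2) by (simp add: outdeg0)
    then have "c = r" using root_rtr c(2) by metis
    then have "(r,r) \<in> F\<^sup>+" using c(1) by simp
    then obtain y where "(r,y) \<in> F" by (meson tranclD)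
    then show False using \<open>isroot F r\<close> by (simp add: isroot_def)
  qed
  show ?thesis using fn ac by (simp add: forest_def)
qed

lemma in_forest_iff:
  fixes F :: "('v::finite \<times> 'v) set"
  shows "in_forest w F \<longleftrightarrow> F \<subseteq> arcs w \<and> forest F"
  using in_forest_forest[of w F] forest_comp[of F]
  by (auto simp: in_forest_def)

lemma card_wc:
  fixes F :: "('v::finite \<times> 'v) set"
  assumes fo: "forest F"
  shows "card (weak_components F) = CARD('v) - card F"
proof -
  have fn: "functional F" and ac: "acyclic F" using fo by (auto simp: forest_def)
  let ?R = "{r. isroot F r}"
  have bij: "bij_betw (\<lambda>r. weak_rel F `` {r}) ?R (weak_components F)"
  proof (rule bij_betwI')
    fix x y assume "x \<in> ?R" "y \<in> ?R"
    then show "(weak_rel F `` {x} = weak_rel F `` {y}) = (x = y)"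
      using same_comp_roots[OF fn] eq_equiv_class_iff[OF weak_equiv UNIV_I UNIV_I, where x=x and y=y] by auto
  next
    fix x assume "x \<in> ?R"
    show "weak_rel F `` {x} \<in> weak_components F"
      unfolding weak_components_def by (rule quotientI) simp
  next
    fix C assume "C \<in> weak_components F"
    then obtain x where x: "C = weak_rel F `` {x}" unfolding weak_components_def by (auto elim: quotientE)
    obtain r where r: "(x,r) \<in> F\<^sup>*" "isroot F r" using exroot[OF _ ac] by auto
    have "weak_rel F `` {x} = weak_rel F `` {r}"
      using equiv_class_eq_iff[OF weak_equiv, where x=x and y=r] rtr_weak[OF r(1)] by simp
    then show "\<exists>r\<in>?R. C = weak_rel F `` {r}" using x r(2) by blast
  qed
  then have c1: "card (weak_components F) = card ?R" by (simp add: bij_betw_same_card)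
  have "inj_on fst F" using fn unfolding functional_def inj_on_def by auto
  then have c2: "card F = card (fst ` F)" by (simp add: card_image)
  have "fst ` F = UNIV - ?R" by (force simp: isroot_def)
  then have "card F = CARD('v) - card ?R" using c2 by (simp add: card_Diff_subset)
  moreover have "card ?R \<le> CARD('v)" by (simp add: card_mono)
  ultimately show ?thesis using c1 by simp
qed

lemma tree_iff:
  fixes F :: "('v::finite \<times> 'v) set"
  assumes fo: "forest F"
  shows "in_tree_rooted_at F i j \<longleftrightarrow> (i,j) \<in> F\<^sup>* \<and> isroot F j"
proof
  have fn: "functional F" using fo by (simp add: forest_def)
  assume "in_tree_rooted_at F i j"
  then have "(i,j) \<in> weak_rel F" "isroot F j" by (auto simp: in_tree_rooted_at_def outdeg0)
  then obtain c where "(i,c) \<in> F\<^sup>*" "(j,c) \<in> F\<^sup>*" using conf[OF fn] unfolding weak_rel_def by blast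
  then show "(i,j) \<in> F\<^sup>* \<and> isroot F j" using root_rtr \<open>isroot F j\<close> by metis
next
  assume "(i,j) \<in> F\<^sup>* \<and> isroot F j"
  then show "in_tree_rooted_at F i j" by (auto simp: in_tree_rooted_at_def outdeg0 rtr_weak)
qed


definition par :: "('v \<times> 'v) set \<Rightarrow> 'v \<Rightarrow> 'v" where
  "par F v = (THE u. (v,u) \<in> F)"

lemma par_eq: "functional F \<Longrightarrow> (v,m) \<in> F \<Longrightarrow> par F v = m"
  unfolding par_def functional_def by (rule the_equality) auto

lemma nonroot_par: "functional F \<Longrightarrow> \<not> isroot F v \<Longrightarrow> (v, par F v) \<in> F"
  unfolding isroot_def using par_eq by fastforce

lemma split_Fo: "functional F \<Longrightarrow> (v,m) \<in> F \<Longrightarrow> F = insert (v,m) (Fo v F)"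
  unfolding functional_def Fo_def by auto

lemma notin_Fo: "(v,m) \<notin> Fo v F" by (simp add: Fo_def)

lemma Fo_insert_same: "Fo v (insert (v,m) G) = Fo v G" by (auto simp: Fo_def)

lemma Fo_idem: "Fo v (Fo v G) = Fo v G" by (auto simp: Fo_def)

lemma Fo_noarcs: "(\<forall>u. (v,u) \<notin> G) \<Longrightarrow> Fo v G = G" by (auto simp: Fo_def)

lemma wt_insert: "finite F \<Longrightarrow> (a,b) \<notin> F \<Longrightarrow> sg_weight w (insert (a,b) F) = w a b * sg_weight w F"
  by (simp add: sg_weight_def)

lemma card_ins: "finite F \<Longrightarrow> (a,b) \<notin> F \<Longrightarrow> card (insert (a,b) F) = Suc (card F)"
  by simp

lemma nomore:
  fixes w :: "'v::finite \<Rightarrow> 'v \<Rightarrow> real"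
  assumes maxN: "\<forall>G. G \<subseteq> arcs w \<longrightarrow> forest G \<longrightarrow> card G \<le> N"
    and F: "F \<subseteq> arcs w" "forest F" "card F = N"
    and r: "isroot F a" and wab: "w a b > 0"
  shows "(b,a) \<in> F\<^sup>*"
proof (rule ccontr)
  assume "(b,a) \<notin> F\<^sup>*"
  then have 1: "forest (insert (a,b) F)" by (rule forest_insert[OF F(2) r])
  have 2: "insert (a,b) F \<subseteq> arcs w" using F(1) wab by (simp add: arcs_def)
  have 3: "(a,b) \<notin> F" using r by (simp add: isroot_def)
  have 4: "card (insert (a,b) F) \<le> N" using maxN 1 2 by simp
  have 5: "card (insert (a,b) F) = Suc (card F)" using card_ins[of F a b] 3 by simp
  show False using 4 5 F(3) by simp
qed

lemma trancl_first:
  assumes "functional F" "(v,u) \<in> F" "(v,x) \<in> F\<^sup>*" "v \<noteq> x"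
  shows "(u,x) \<in> F\<^sup>*"
proof -
  have "(v,x) \<in> F\<^sup>+" using assms(3,4) by (meson rtranclD)
  then obtain y where y: "(v,y) \<in> F" "(y,x) \<in> F\<^sup>*" by (meson tranclD)
  have "y = u" using assms(1,2) y(1) unfolding functional_def by blast
  then show ?thesis using y(2) by simp
qed

lemma partA:
  fixes w :: "'v::finite \<Rightarrow> 'v \<Rightarrow> real"
  assumes w0: "\<forall>a b. w a b \<ge> 0"
    and maxN: "\<forall>G. G \<subseteq> arcs w \<longrightarrow> forest G \<longrightarrow> card G \<le> N"
  defines "MF \<equiv> {F. F \<subseteq> arcs w \<and> forest F \<and> card F = N}"
  shows "(\<Sum>x\<in>MF \<times> UNIV. sg_weight w (fst x) * w i (snd x) *
            (if (snd x, j) \<in> (fst x)\<^sup>* \<and> isroot (fst x) j then 1 else 0))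
       = (\<Sum>x\<in>MF \<times> UNIV. sg_weight w (fst x) * w i (snd x) *
            (if (i, j) \<in> (fst x)\<^sup>* \<and> isroot (fst x) j then 1 else 0))"
proof -
  define f where "f x = sg_weight w (fst x) * w i (snd x) *
            (if (snd x, j) \<in> (fst x)\<^sup>* \<and> isroot (fst x) j then 1 else 0)" for x
  define g where "g x = sg_weight w (fst x) * w i (snd x) *
            (if (i, j) \<in> (fst x)\<^sup>* \<and> isroot (fst x) j then 1 else (0::real))" for x
  define T where "T = {x \<in> MF \<times> UNIV. \<not> isroot (fst x) i \<and> (snd x, i) \<notin> (fst x)\<^sup>* \<and> w i (snd x) > 0}"
  define \<Phi> where "\<Phi> x = (insert (i, snd x) (Fo i (fst x)), par (fst x) i)" for x
  have fin: "finite (MF \<times> (UNIV::'v set))" by (rule finite)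
  have TD: "T \<subseteq> MF \<times> UNIV" by (auto simp: T_def)
  have out: "f x = g x" if x: "x \<in> MF \<times> UNIV - T" for x
  proof -
    obtain F k where xFk: "x = (F,k)" by fastforce
    have F: "F \<subseteq> arcs w" "forest F" "card F = N" using x xFk by (auto simp: MF_def)
    have fn: "functional F" using F(2) by (simp add: forest_def)
    show ?thesis
    proof (cases "w i k > 0")
      case False
      then have "w i k = 0" using w0 by (meson not_less order_antisym)
      then show ?thesis by (simp add: f_def g_def xFk)
    next
      case True
      have "isroot F i \<or> (k,i) \<in> F\<^sup>*" using x xFk True by (auto simp: T_def)
      then have ki: "(k,i) \<in> F\<^sup>*" using nomore[OF maxN F _ True] by (cases "isroot F i") simp_all
      have "((k,j) \<in> F\<^sup>* \<and> isroot F j) \<longleftrightarrow> ((i,j) \<in> F\<^sup>* \<and> isroot F j)"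
      proof
        assume a: "(k,j) \<in> F\<^sup>* \<and> isroot F j"
        then have "(i,j) \<in> F\<^sup>* \<or> (j,i) \<in> F\<^sup>*" using det[OF fn ki, of j] by simp
        then show "(i,j) \<in> F\<^sup>* \<and> isroot F j"
        proof
          assume "(j,i) \<in> F\<^sup>*"
          then have "i = j" using root_rtr[of F j i] a by simp
          then show ?thesis using a by simp
        qed (use a in simp)
      next
        assume "(i,j) \<in> F\<^sup>* \<and> isroot F j"
        then show "(k,j) \<in> F\<^sup>* \<and> isroot F j" using ki by (meson rtrancl_trans)
      qed
      then show ?thesis by (simp add: f_def g_def xFk)
    qed
  qed
  have key: "\<Phi> x \<in> T \<and> \<Phi> (\<Phi> x) = x \<and> g (\<Phi> x) = f x" if x: "x \<in> T" for x
  proof -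
    obtain F k where xFk: "x = (F,k)" by fastforce
    have F: "F \<subseteq> arcs w" "forest F" "card F = N" and nr: "\<not> isroot F i"
      and ki: "(k,i) \<notin> F\<^sup>*" and wik: "w i k > 0"
      using x xFk by (auto simp: T_def MF_def)
    have fn: "functional F" and ac: "acyclic F" using F(2) by (auto simp: forest_def)
    define m where "m = par F i"
    have im: "(i,m) \<in> F" using nonroot_par[OF fn nr] by (simp add: m_def)
    define F' where "F' = Fo i F"
    have FF': "F = insert (i,m) F'" using split_Fo[OF fn im] by (simp add: F'_def)
    have imF': "(i,m) \<notin> F'" by (simp add: F'_def notin_Fo)
    have F'F: "F' \<subseteq> F" by (simp add: F'_def Fo_sub)
    have finF': "finite F'" by simp
    have foF': "forest F'" using forest_subset[OF F(2) F'F] .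
    have rtF': "(a,b) \<in> F'\<^sup>* \<Longrightarrow> (a,b) \<in> F\<^sup>*" for a b using rtrancl_mono[OF F'F] by (rule subsetD)
    define G where "G = insert (i,k) F'"
    have ikF': "(i,k) \<notin> F'" by (simp add: F'_def notin_Fo)
    have kiF': "(k,i) \<notin> F'\<^sup>*" using ki rtF'[of k i] by auto
    have riF': "isroot F' i" using isroot_Fo[of i F] by (simp add: F'_def)
    have foG: "forest G" unfolding G_def by (rule forest_insert[OF foF' riF' kiF'])
    have fnG: "functional G" using foG by (simp add: forest_def)
    have cardG: "card G = N" using F(3) FF' imF' ikF' by (simp add: G_def)
    have GA: "G \<subseteq> arcs w" using F(1) F'F wik by (auto simp: G_def arcs_def)
    have GMF: "G \<in> MF" using foG cardG GA by (simp add: MF_def)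
    have FoG: "Fo i G = F'" by (simp add: G_def Fo_insert_same F'_def Fo_idem)
    have nrG: "\<not> isroot G i" by (auto simp: G_def isroot_def)
    have parG: "par G i = k" using par_eq[OF fnG] by (simp add: G_def)
    have miG: "(m,i) \<notin> G\<^sup>*"
    proof
      assume "(m,i) \<in> G\<^sup>*"
      then have "(m,i) \<in> F'\<^sup>*" using avoid1[of m i G] FoG by simp
      then have "(m,i) \<in> F\<^sup>*" by (rule rtF')
      then have "(i,i) \<in> F\<^sup>+" using im by (meson rtrancl_into_trancl2)
      then show False using ac by (simp add: acyclic_def)
    qed
    have wim: "w i m > 0" using F(1) im by (auto simp: arcs_def)
    have Phix: "\<Phi> x = (G,m)" by (simp add: \<Phi>_def xFk G_def F'_def m_def)
    have PhiT: "\<Phi> x \<in> T" using GMF nrG miG wim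
      by (simp add: Phix T_def)
    have "\<Phi> (G,m) = (insert (i,m) (Fo i G), par G i)" by (simp add: \<Phi>_def)
    also have "\<dots> = (F,k)" using FoG parG FF' by simp
    finally have PhiPhi: "\<Phi> (\<Phi> x) = x" using Phix xFk by simp
    have kiG: "(k,i) \<notin> G\<^sup>*"
    proof
      assume "(k,i) \<in> G\<^sup>*"
      then have "(k,i) \<in> F'\<^sup>*" using avoid1[of k i G] FoG by simp
      then show False using kiF' by simp
    qed
    have Peq: "((i,j) \<in> G\<^sup>* \<and> isroot G j) \<longleftrightarrow> ((k,j) \<in> F\<^sup>* \<and> isroot F j)"
    proof
      assume a: "(i,j) \<in> G\<^sup>* \<and> isroot G j"
      then have "i \<noteq> j" using nrG by auto
      moreover have "(i,k) \<in> G" by (simp add: G_def)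
      ultimately have "(k,j) \<in> G\<^sup>*" using trancl_first[OF fnG, of i k j] a by simp
      then have kjF': "(k,j) \<in> F'\<^sup>*" using avoid2[of k j G i] kiG FoG by simp
      then have "j \<noteq> i" using kiF' by auto
      have "(j,u) \<notin> F" for u
      proof
        assume "(j,u) \<in> F"
        then have "(j,u) \<in> F'" using \<open>j \<noteq> i\<close> by (simp add: F'_def Fo_def)
        then have "(j,u) \<in> G" by (simp add: G_def)
        then show False using a by (simp add: isroot_def)
      qed
      then have "isroot F j" by (simp add: isroot_def)
      then show "(k,j) \<in> F\<^sup>* \<and> isroot F j" using rtF'[OF kjF'] by simp
    next
      assume a: "(k,j) \<in> F\<^sup>* \<and> isroot F j"
      then have kjF': "(k,j) \<in> F'\<^sup>*" using avoid2[of k j F i] ki by (simp add: F'_def)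
      have "(k,j) \<in> G\<^sup>*" using kjF' rtrancl_mono[of F' G] by (auto simp: G_def)
      moreover have "(i,k) \<in> G" by (simp add: G_def)
      ultimately have "(i,j) \<in> G\<^sup>*" by (meson converse_rtrancl_into_rtrancl)
      moreover have "j \<noteq> i" using a ki by auto
      then have "isroot G j" using a F'F by (auto simp: isroot_def G_def)
      ultimately show "(i,j) \<in> G\<^sup>* \<and> isroot G j" by blast
    qed
    have wF: "sg_weight w F = w i m * sg_weight w F'" using FF' imF' wt_insert[OF finF' imF'] by simp
    have wG: "sg_weight w G = w i k * sg_weight w F'" using wt_insert[OF finF' ikF'] by (simp add: G_def)
    have "g (G,m) = f (F,k)"
      using Peq wF wG
      by (simp add: g_def f_def)
    then have "g (\<Phi> x) = f x" using Phix xFk by simp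
    then show ?thesis using PhiT PhiPhi by blast
  qed
  have ST: "sum f T = sum g T"
    by (rule sum.reindex_bij_witness[of T \<Phi> \<Phi> T g f]) (simp_all add: key)
  have "sum f (MF \<times> UNIV) = sum f (MF \<times> UNIV - T) + sum f T"
    using sum.subset_diff[OF TD fin] by simp
  also have "\<dots> = sum g (MF \<times> UNIV - T) + sum g T"
    using sum.cong[OF refl out, of "MF \<times> UNIV - T"] ST by simp
  also have "\<dots> = sum g (MF \<times> UNIV)"
    using sum.subset_diff[OF TD fin, of g] by simp
  finally show ?thesis unfolding f_def g_def .
qed


lemma ne_trancl_out: "(a,b) \<in> F\<^sup>* \<Longrightarrow> a \<noteq> b \<Longrightarrow> \<exists>u. (a,u) \<in> F"
  by (metis converse_rtranclE)

lemma partB: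
  fixes w :: "'v::finite \<Rightarrow> 'v \<Rightarrow> real"
  assumes w0: "\<forall>a b. w a b \<ge> 0" and wii: "\<forall>a. w a a = 0"
    and maxN: "\<forall>G. G \<subseteq> arcs w \<longrightarrow> forest G \<longrightarrow> card G \<le> N"
  defines "MF \<equiv> {F. F \<subseteq> arcs w \<and> forest F \<and> card F = N}"
  shows "(\<Sum>x\<in>{x\<in>MF \<times> UNIV. (i,j) \<in> (fst x)\<^sup>* \<and> isroot (fst x) j \<and> w j (snd x) > 0}.
            sg_weight w (fst x) * w j (snd x))
       = (\<Sum>x\<in>{x\<in>MF \<times> UNIV. (i, snd x) \<in> (fst x)\<^sup>* \<and> isroot (fst x) (snd x) \<and> w (snd x) j > 0}.
            sg_weight w (fst x) * w (snd x) j)"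
proof -
  define A where "A = {x\<in>MF \<times> UNIV. (i,j) \<in> (fst x)\<^sup>* \<and> isroot (fst x) j \<and> w j (snd x) > 0}"
  define B where "B = {x\<in>MF \<times> UNIV. (i, snd x) \<in> (fst x)\<^sup>* \<and> isroot (fst x) (snd x) \<and> w (snd x) j > 0}"
  define \<psi> where "\<psi> x = (insert (snd x, j) (Fo j (fst x)), par (fst x) j)" for x
  define h where "h x = sg_weight w (fst x) * w j (snd x)" for x
  have facts: "\<psi> x \<in> A \<and> h (\<psi> x) = sg_weight w (fst x) * w (snd x) j
      \<and> (snd (\<psi> x), snd x) \<in> (fst (\<psi> x))\<^sup>* \<and> (snd x, j) \<in> fst (\<psi> x) \<and> snd x \<noteq> j
      \<and> forest (fst (\<psi> x)) \<and> isroot (fst (\<psi> x)) j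
      \<and> fst x = insert (j, snd (\<psi> x)) (fst (\<psi> x) - {(snd x, j)})"
    if x: "x \<in> B" for x
  proof -
    obtain F k where xFk: "x = (F,k)" by fastforce
    have F: "F \<subseteq> arcs w" "forest F" "card F = N" and ik: "(i,k) \<in> F\<^sup>*"
      and rk: "isroot F k" and wkj: "w k j > 0"
      using x xFk by (auto simp: B_def MF_def)
    have fn: "functional F" and ac: "acyclic F" using F(2) by (auto simp: forest_def)
    have kj: "k \<noteq> j" using wkj wii by auto
    have jk: "(j,k) \<in> F\<^sup>*" by (rule nomore[OF maxN F rk wkj])
    obtain u where "(j,u) \<in> F" using ne_trancl_out[OF jk] kj by auto
    then have nrj: "\<not> isroot F j" by (auto simp: isroot_def)
    define m where "m = par F j"
    have jm: "(j,m) \<in> F" using nonroot_par[OF fn nrj] by (simp add: m_def)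
    define F' where "F' = Fo j F"
    have FF': "F = insert (j,m) F'" using split_Fo[OF fn jm] by (simp add: F'_def)
    have jmF': "(j,m) \<notin> F'" by (simp add: F'_def notin_Fo)
    have F'F: "F' \<subseteq> F" by (simp add: F'_def Fo_sub)
    have finF': "finite F'" by (rule finite)
    have foF': "forest F'" using forest_subset[OF F(2) F'F] .
    have rtF': "(a,b) \<in> F'\<^sup>* \<Longrightarrow> (a,b) \<in> F\<^sup>*" for a b using rtrancl_mono[OF F'F] by (rule subsetD)
    define G where "G = insert (k,j) F'"
    have rtG: "(a,b) \<in> F'\<^sup>* \<Longrightarrow> (a,b) \<in> G\<^sup>*" for a b
      using rtrancl_mono[of F' G] by (auto simp: G_def)
    have kjF': "(k,j) \<notin> F'" using rk F'F by (auto simp: isroot_def)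
    have rkF': "isroot F' k" using rk F'F by (auto simp: isroot_def)
    have noj: "(j,v) \<notin> F'" for v by (simp add: F'_def Fo_def)
    have jkF': "(j,k) \<notin> F'\<^sup>*"
    proof
      assume "(j,k) \<in> F'\<^sup>*"
      then obtain v where "(j,v) \<in> F'" using ne_trancl_out kj by metis
      then show False using noj by simp
    qed
    have foG: "forest G" unfolding G_def by (rule forest_insert[OF foF' rkF' jkF'])
    have cardG: "card G = N" using F(3) FF' jmF' kjF' finF' by (simp add: G_def)
    have GA: "G \<subseteq> arcs w" using F(1) F'F wkj by (auto simp: G_def arcs_def)
    have rjG: "isroot G j" using noj kj by (auto simp: G_def isroot_def)
    have ijG: "(i,j) \<in> G\<^sup>*"
    proof (cases "(i,j) \<in> F\<^sup>*")
      case True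
      then have "(i,j) \<in> F'\<^sup>*" using avoid1[of i j F] by (simp add: F'_def)
      then show ?thesis by (rule rtG)
    next
      case False
      then have "(i,k) \<in> F'\<^sup>*" using avoid2[of i k F j] ik by (simp add: F'_def)
      then have "(i,k) \<in> G\<^sup>*" by (rule rtG)
      moreover have "(k,j) \<in> G" by (simp add: G_def)
      ultimately show ?thesis by (rule rtrancl_into_rtrancl)
    qed
    have wjm: "w j m > 0" using F(1) jm by (auto simp: arcs_def)
    have GMF: "G \<in> MF" using foG cardG GA by (simp add: MF_def)
    have psi: "\<psi> (F,k) = (G,m)" by (simp add: \<psi>_def G_def F'_def m_def)
    have psix: "\<psi> x = (G,m)" using psi xFk by simp
    have inA: "\<psi> x \<in> A" using GMF ijG rjG wjm by (simp add: psix A_def)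
    have wF: "sg_weight w F = w j m * sg_weight w F'" using FF' wt_insert[OF finF' jmF'] by simp
    have wG: "sg_weight w G = w k j * sg_weight w F'" using wt_insert[OF finF' kjF'] by (simp add: G_def)
    have hx: "h (\<psi> x) = sg_weight w (fst x) * w (snd x) j"
      unfolding xFk using wF wG by (simp add: h_def psi)
    have mk: "(m,k) \<in> G\<^sup>*"
    proof -
      have "(m,k) \<in> F\<^sup>*" using trancl_first[OF fn jm jk] kj by simp
      moreover have "(m,j) \<notin> F\<^sup>*"
      proof
        assume "(m,j) \<in> F\<^sup>*"
        then have "(j,j) \<in> F\<^sup>+" using jm by (meson rtrancl_into_trancl2)
        then show False using ac by (simp add: acyclic_def)
      qed
      ultimately have "(m,k) \<in> F'\<^sup>*" using avoid2[of m k F j] by (simp add: F'_def)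
      then show ?thesis by (rule rtG)
    qed
    have Frec: "F = insert (j,m) (G - {(k,j)})"
      using FF' kjF' by (auto simp: G_def)
    have kjG: "(k,j) \<in> G" by (simp add: G_def)
    have inA': "(G,m) \<in> A" using inA psix by simp
    have hx': "h (G,m) = sg_weight w F * w k j" using hx psix xFk by simp
    show ?thesis unfolding xFk psi fst_conv snd_conv
      by (intro conjI, rule inA', rule hx', rule mk, rule kjG, rule kj, rule foG, rule rjG, rule Frec)
  qed
  have inj: "inj_on \<psi> B"
  proof (rule inj_onI)
    fix x1 x2 assume x1: "x1 \<in> B" and x2: "x2 \<in> B" and eq: "\<psi> x1 = \<psi> x2"
    define G where "G = fst (\<psi> x1)"
    define m where "m = snd (\<psi> x1)"
    define k1 where "k1 = snd x1"
    define k2 where "k2 = snd x2"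
    have f1: "(m,k1) \<in> G\<^sup>*" "(k1,j) \<in> G" "k1 \<noteq> j" "forest G" "isroot G j"
      "fst x1 = insert (j,m) (G - {(k1,j)})"
      using facts[OF x1] by (simp_all add: G_def m_def k1_def)
    have f2: "(m,k2) \<in> G\<^sup>*" "(k2,j) \<in> G" "k2 \<noteq> j"
      "fst x2 = insert (j,m) (G - {(k2,j)})"
      using facts[OF x2] eq by (simp_all add: G_def m_def k2_def)
    have fnG: "functional G" using f1(4) by (simp add: forest_def)
    have "k1 = k2"
    proof (rule ccontr)
      assume ne: "k1 \<noteq> k2"
      have "(k1,k2) \<in> G\<^sup>* \<or> (k2,k1) \<in> G\<^sup>*" using det[OF fnG f1(1) f2(1)] .
      then show False
      proof
        assume "(k1,k2) \<in> G\<^sup>*"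
        then have "(j,k2) \<in> G\<^sup>*" using trancl_first[OF fnG f1(2) _ ne] by simp
        then have "k2 = j" using root_rtr[OF f1(5)] by simp
        then show False using f2(3) by simp
      next
        assume "(k2,k1) \<in> G\<^sup>*"
        then have "(j,k1) \<in> G\<^sup>*" using trancl_first[OF fnG f2(2) _ ] ne by simp
        then have "k1 = j" using root_rtr[OF f1(5)] by simp
        then show False using f1(3) by simp
      qed
    qed
    then have "fst x1 = fst x2" using f1(6) f2(4) by simp
    moreover have "snd x1 = snd x2" using \<open>k1 = k2\<close> by (simp add: k1_def k2_def)
    ultimately show "x1 = x2" by (rule prod_eqI)
  qed
  have img: "\<psi> ` B = A"
  proof
    show "\<psi> ` B \<subseteq> A" using facts by blast
  next
    show "A \<subseteq> \<psi> ` B"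
    proof
      fix y assume y: "y \<in> A"
      obtain F' m where yFm: "y = (F',m)" by fastforce
      have F': "F' \<subseteq> arcs w" "forest F'" "card F' = N" and ij: "(i,j) \<in> F'\<^sup>*"
        and rj: "isroot F' j" and wjm: "w j m > 0"
        using y yFm by (auto simp: A_def MF_def)
      have fn': "functional F'" and ac': "acyclic F'" using F'(2) by (auto simp: forest_def)
      have mj: "(m,j) \<in> F'\<^sup>*" by (rule nomore[OF maxN F' rj wjm])
      have mnj: "m \<noteq> j" using wjm wii by auto
      have "(m,j) \<in> F'\<^sup>+" using mj mnj by (meson rtranclD)
      then obtain k where mk: "(m,k) \<in> F'\<^sup>*" and kj: "(k,j) \<in> F'" by (meson tranclD2)
      have knj: "k \<noteq> j" using kj rj by (auto simp: isroot_def)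
      define Fk where "Fk = Fo k F'"
      define F where "F = insert (j,m) Fk"
      have F'rec: "F' = insert (k,j) Fk" using split_Fo[OF fn' kj] by (simp add: Fk_def)
      have kjFk: "(k,j) \<notin> Fk" by (simp add: Fk_def notin_Fo)
      have FkF': "Fk \<subseteq> F'" by (simp add: Fk_def Fo_sub)
      have finFk: "finite Fk" by (rule finite)
      have foFk: "forest Fk" using forest_subset[OF F'(2) FkF'] .
      have rtFk: "(a,b) \<in> Fk\<^sup>* \<Longrightarrow> (a,b) \<in> F\<^sup>*" for a b
        using rtrancl_mono[of Fk F] by (auto simp: F_def)
      have rjFk: "isroot Fk j" using rj FkF' by (auto simp: isroot_def)
      have mjFk: "(m,j) \<notin> Fk\<^sup>*"
      proof
        assume "(m,j) \<in> Fk\<^sup>*"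
        then have "(j,k) \<in> F'\<^sup>*" using Lpath[OF fn', of m j k] mk by (simp add: Fk_def)
        then have "k = j" using root_rtr[OF rj] by simp
        then show False using knj by simp
      qed
      have foF: "forest F" unfolding F_def by (rule forest_insert[OF foFk rjFk mjFk])
      have jmFk: "(j,m) \<notin> Fk" using rj FkF' by (auto simp: isroot_def)
      have cardF: "card F = N" using F'(3) F'rec jmFk kjFk finFk by (simp add: F_def)
      have FA: "F \<subseteq> arcs w" using F'(1) FkF' wjm by (auto simp: F_def arcs_def)
      have rk: "isroot F k" using knj by (auto simp: F_def Fk_def Fo_def isroot_def)
      have ik: "(i,k) \<in> F\<^sup>*"
      proof (cases "(i,k) \<in> F'\<^sup>*")
        case True
        then have "(i,k) \<in> Fk\<^sup>*" using avoid1[of i k F'] by (simp add: Fk_def)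
        then show ?thesis by (rule rtFk)
      next
        case False
        then have "(i,j) \<in> Fk\<^sup>*" using avoid2[of i j F' k] ij by (simp add: Fk_def)
        then have 1: "(i,j) \<in> F\<^sup>*" by (rule rtFk)
        have 2: "(j,m) \<in> F" by (simp add: F_def)
        have "(m,k) \<in> Fk\<^sup>*" using avoid1[of m k F'] mk by (simp add: Fk_def)
        then have 3: "(m,k) \<in> F\<^sup>*" by (rule rtFk)
        from 1 2 3 show ?thesis by (meson rtrancl_into_rtrancl rtrancl_trans)
      qed
      have wkj: "w k j > 0" using F'(1) kj by (auto simp: arcs_def)
      have FMF: "F \<in> MF" using foF cardF FA by (simp add: MF_def)
      have inB: "(F,k) \<in> B" using FMF ik rk wkj by (simp add: B_def)
      have fnF: "functional F" using foF by (simp add: forest_def)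
      have noj: "(j,v) \<notin> Fk" for v using rjFk by (simp add: isroot_def)
      have FojF: "Fo j F = Fk" unfolding F_def Fo_insert_same by (rule Fo_noarcs) (simp add: noj)
      have parF: "par F j = m" using par_eq[OF fnF] by (simp add: F_def)
      have "\<psi> (F,k) = (F',m)" using FojF parF F'rec by (simp add: \<psi>_def)
      then show "y \<in> \<psi> ` B" using inB yFm by (metis image_eqI)
    qed
  qed
  have "sum h A = sum (h \<circ> \<psi>) B" using sum.reindex[OF inj, of h] img by simp
  also have "\<dots> = (\<Sum>x\<in>B. sg_weight w (fst x) * w (snd x) j)"
    using facts by (intro sum.cong) simp_all
  finally show ?thesis by (simp add: h_def A_def B_def)
qed


lemma card_forest_le:
  fixes F :: "('v::finite \<times> 'v) set"
  assumes "forest F" shows "card F \<le> CARD('v)"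
proof -
  have "inj_on fst F" using assms unfolding forest_def functional_def inj_on_def by auto
  then have "card F = card (fst ` F)" by (simp add: card_image)
  also have "\<dots> \<le> CARD('v)" by (rule card_mono) simp_all
  finally show ?thesis .
qed

lemma sum_prod_split:
  fixes a :: "'a \<Rightarrow> real" and c :: "'b::finite \<Rightarrow> real"
  assumes "finite M"
  shows "(\<Sum>k\<in>UNIV. c k * (\<Sum>F\<in>M. if P F k then a F else 0))
       = (\<Sum>x\<in>M \<times> UNIV. a (fst x) * c (snd x) * (if P (fst x) (snd x) then 1 else 0))"
proof -
  have "(\<Sum>k\<in>UNIV. c k * (\<Sum>F\<in>M. if P F k then a F else 0))
      = (\<Sum>k\<in>UNIV. \<Sum>F\<in>M. a F * c k * (if P F k then 1 else 0))"
    by (simp add: sum_distrib_left)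
       (rule sum.cong, simp, rule sum.cong, simp_all)
  also have "\<dots> = (\<Sum>F\<in>M. \<Sum>k\<in>UNIV. a F * c k * (if P F k then 1 else 0))"
    by (rule sum.swap)
  also have "\<dots> = (\<Sum>x\<in>M \<times> UNIV. a (fst x) * c (snd x) * (if P (fst x) (snd x) then 1 else 0))"
    by (simp add: sum.cartesian_product split_beta)
  finally show ?thesis .
qed

lemma sum_filter_pos:
  fixes f c :: "'a \<Rightarrow> real"
  assumes "finite S" "\<forall>x. c x \<ge> 0"
  shows "(\<Sum>x\<in>S. f x * c x * (if P x then 1 else 0)) = (\<Sum>x\<in>{x\<in>S. P x \<and> c x > 0}. f x * c x)"
proof -
  have "(\<Sum>x\<in>{x\<in>S. P x \<and> c x > 0}. f x * c x) = (\<Sum>x\<in>S. if P x \<and> c x > 0 then f x * c x else 0)"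
    by (rule sum.inter_filter[OF assms(1)])
  also have "\<dots> = (\<Sum>x\<in>S. f x * c x * (if P x then 1 else 0))"
  proof (rule sum.cong)
    fix x
    have "0 \<le> c x" using assms(2) by simp
    then have "c x = 0 \<or> c x > 0" by linarith
    then show "(if P x \<and> c x > 0 then f x * c x else 0) = f x * c x * (if P x then 1 else 0)"
      by auto
  qed simp
  finally show ?thesis by simp
qed

lemma lap_col:
  fixes w :: "'v::finite \<Rightarrow> 'v \<Rightarrow> real"
  assumes "\<forall>i. w i i = 0"
  shows "(\<Sum>k\<in>UNIV. x k * laplacian w $ k $ j) = (\<Sum>k\<in>UNIV. x j * w j k - x k * w k j)"
proof -
  have "(\<Sum>k\<in>UNIV. x k * laplacian w $ k $ j) = x j * laplacian w $ j $ j + (\<Sum>k\<in>UNIV-{j}. x k * laplacian w $ k $ j)"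
    by (simp add: sum.remove)
  also have "\<dots> = x j * (\<Sum>k\<in>UNIV-{j}. w j k) - (\<Sum>k\<in>UNIV-{j}. x k * w k j)"
    by (simp add: laplacian_def sum_negf)
  also have "\<dots> = (\<Sum>k\<in>UNIV-{j}. x j * w j k - x k * w k j)"
    by (simp add: sum_distrib_left sum_subtractf)
  also have "\<dots> = (\<Sum>k\<in>UNIV. x j * w j k - x k * w k j)"
    by (simp add: sum.remove[of UNIV j] assms)
  finally show ?thesis .
qed

lemma lap_row2:
  fixes w :: "'v::finite \<Rightarrow> 'v \<Rightarrow> real"
  assumes "\<forall>i. w i i = 0"
  shows "(\<Sum>k\<in>UNIV. laplacian w $ i $ k * x k) = (\<Sum>k\<in>UNIV. w i k * x i - w i k * x k)"
  using lap_row[where w=w, OF assms, of "\<chi> k. x k" i]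
  by (simp add: matrix_vector_mult_def right_diff_distrib)


theorem proposition14:
  fixes w :: "'v::finite \<Rightarrow> 'v \<Rightarrow> real"
  assumes "CARD('v) > 1"
    and "\<forall>i j. w i j \<ge> 0"
    and "\<forall>i. w i i = 0"
  defines "n \<equiv> CARD('v)"
    and "d \<equiv> in_forest_dim w"
  shows "(\<exists>X. is_group_inverse (laplacian w) X)
    \<and> (\<forall>X. is_group_inverse (laplacian w) X \<longrightarrow>
         (1 / sigma_k w (n - d)) *\<^sub>R Q_k w (n - d) = mat 1 - laplacian w ** X)"
proof -
  have w0: "\<forall>a b. w a b \<ge> 0" using assms(2) by simp
  have wii: "\<forall>a. w a a = 0" using assms(3) by simp
  define N where "N = n - d"
  define MF where "MF = {F::('v \<times> 'v) set. F \<subseteq> arcs w \<and> forest F \<and> card F = N}"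
  define S where "S = {card (weak_components F) | F. in_forest w F}"
  have SI: "S = (\<lambda>F. card (weak_components F)) ` {F. in_forest w F}" by (auto simp: S_def)
  have finS: "finite S" unfolding SI by (rule finite_imageI) (rule finite)
  have e: "in_forest w {}"
    by (simp add: in_forest_iff forest_def functional_def acyclic_def)
  have Sne: "S \<noteq> {}" using e by (auto simp: S_def)
  have dS: "d = Min S" by (simp add: d_def in_forest_dim_def S_def)
  have "d \<in> S" using Min_in[OF finS Sne] dS by simp
  then obtain F0 where F0: "in_forest w F0" "d = card (weak_components F0)" by (auto simp: S_def)
  have dle: "d \<le> card (weak_components F)" if "in_forest w F" for F
  proof -
    have "card (weak_components F) \<in> S" using that by (auto simp: S_def)
    then show ?thesis using Min_le[OF finS] dS by simp
  qed
  have maxN: "\<forall>G. G \<subseteq> arcs w \<longrightarrow> forest G \<longrightarrow> card G \<le> N"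
  proof (intro allI impI)
    fix G :: "('v \<times> 'v) set" assume G: "G \<subseteq> arcs w" "forest G"
    have "d \<le> n - card G" using dle[of G] G card_wc[OF G(2)] by (simp add: in_forest_iff n_def)
    moreover have "card G \<le> n" using card_forest_le[OF G(2)] by (simp add: n_def)
    ultimately show "card G \<le> N" by (simp add: N_def)
  qed
  have F0f: "F0 \<subseteq> arcs w" "forest F0" using F0(1) by (simp_all add: in_forest_iff)
  have F0MF: "F0 \<in> MF"
  proof -
    have "d = n - card F0" using F0(2) card_wc[OF F0f(2)] by (simp add: n_def)
    moreover have "card F0 \<le> n" using card_forest_le[OF F0f(2)] by (simp add: n_def)
    ultimately have "card F0 = N" by (simp add: N_def)
    then show ?thesis using F0f by (simp add: MF_def)
  qed
  have finMF: "finite MF" by (rule finite)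
  have sig: "sigma_k w N = (\<Sum>F\<in>MF. sg_weight w F)"
  proof -
    have "{F. in_forest w F \<and> card F = N} = MF" by (auto simp: MF_def in_forest_iff)
    then show ?thesis by (simp add: sigma_k_def)
  qed
  have Qe: "Q_k w N $ i $ j = (\<Sum>F\<in>MF. if (i,j) \<in> F\<^sup>* \<and> isroot F j then sg_weight w F else 0)" for i j
  proof -
    have "{F. in_forest w F \<and> card F = N \<and> in_tree_rooted_at F i j} = {F\<in>MF. (i,j) \<in> F\<^sup>* \<and> isroot F j}"
    proof (rule set_eqI)
      fix F :: "('v \<times> 'v) set"
      show "F \<in> {F. in_forest w F \<and> card F = N \<and> in_tree_rooted_at F i j} \<longleftrightarrow> F \<in> {F\<in>MF. (i,j) \<in> F\<^sup>* \<and> isroot F j}"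
      proof (cases "forest F")
        case True
        then show ?thesis using tree_iff[OF True, of i j] by (auto simp: MF_def in_forest_iff)
      next
        case False
        then show ?thesis by (auto simp: MF_def in_forest_iff)
      qed
    qed
    then show ?thesis by (simp add: Q_k_def sum.inter_filter[OF finMF])
  qed
  have wtnn: "sg_weight w F \<ge> 0" for F
    unfolding sg_weight_def by (rule prod_nonneg) (simp add: split_beta w0)
  have wtpos: "sg_weight w F > 0" if "F \<subseteq> arcs w" for F
    unfolding sg_weight_def
  proof (rule prod_pos)
    fix a assume "a \<in> F"
    then show "0 < (case a of (i, j) \<Rightarrow> w i j)" using that by (auto simp: arcs_def split_beta)
  qed
  define \<sigma> where "\<sigma> = sigma_k w N"
  have spos: "\<sigma> > 0"
  proof -
    have "sg_weight w F0 \<le> (\<Sum>F\<in>MF. sg_weight w F)"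
      by (rule member_le_sum[OF F0MF _ finMF]) (simp add: wtnn)
    moreover have "sg_weight w F0 > 0" using wtpos F0f(1) by simp
    ultimately show ?thesis by (simp add: \<sigma>_def sig)
  qed
  define Q where "Q = Q_k w N"
  define L where "L = laplacian w"
  define J where "J = (1 / \<sigma>) *\<^sub>R Q"
  have LQ: "L ** Q = 0"
  proof (simp add: vec_eq_iff, intro allI)
    fix i j
    have "(L ** Q)$i$j = (\<Sum>k\<in>UNIV. L$i$k * Q$k$j)" by (simp add: matrix_matrix_mult_def)
    also have "\<dots> = (\<Sum>k\<in>UNIV. w i k * Q$i$j - w i k * Q$k$j)"
      using lap_row2[where w=w, OF wii, of i "\<lambda>k. Q$k$j"] by (simp add: L_def)
    also have "\<dots> = (\<Sum>k\<in>UNIV. w i k * Q$i$j) - (\<Sum>k\<in>UNIV. w i k * Q$k$j)"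
      by (simp add: sum_subtractf)
    also have "(\<Sum>k\<in>UNIV. w i k * Q$i$j) = (\<Sum>x\<in>MF \<times> UNIV. sg_weight w (fst x) * w i (snd x) *
            (if (i, j) \<in> (fst x)\<^sup>* \<and> isroot (fst x) j then 1 else 0))"
      unfolding Q_def Qe
      by (rule sum_prod_split[OF finMF, where P="\<lambda>F k. (i,j) \<in> F\<^sup>* \<and> isroot F j"])
    also have "(\<Sum>k\<in>UNIV. w i k * Q$k$j) = (\<Sum>x\<in>MF \<times> UNIV. sg_weight w (fst x) * w i (snd x) *
            (if (snd x, j) \<in> (fst x)\<^sup>* \<and> isroot (fst x) j then 1 else 0))"
      unfolding Q_def Qe
      by (rule sum_prod_split[OF finMF, where P="\<lambda>F k. (k,j) \<in> F\<^sup>* \<and> isroot F j"])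
    finally show "(L ** Q)$i$j = 0"
      using partA[OF w0 maxN, of i j] by (simp add: MF_def)
  qed
  have QL: "Q ** L = 0"
  proof (simp add: vec_eq_iff, intro allI)
    fix i j
    have "(Q ** L)$i$j = (\<Sum>k\<in>UNIV. Q$i$k * L$k$j)" by (simp add: matrix_matrix_mult_def)
    also have "\<dots> = (\<Sum>k\<in>UNIV. Q$i$j * w j k - Q$i$k * w k j)"
      using lap_col[where w=w, OF wii, of "\<lambda>k. Q$i$k" j] by (simp add: L_def)
    also have "\<dots> = (\<Sum>k\<in>UNIV. w j k * Q$i$j) - (\<Sum>k\<in>UNIV. w k j * Q$i$k)"
      by (simp add: sum_subtractf mult.commute)
    also have "(\<Sum>k\<in>UNIV. w j k * Q$i$j) = (\<Sum>x\<in>MF \<times> UNIV. sg_weight w (fst x) * w j (snd x) *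
            (if (i, j) \<in> (fst x)\<^sup>* \<and> isroot (fst x) j then 1 else 0))"
      unfolding Q_def Qe
      by (rule sum_prod_split[OF finMF, where P="\<lambda>F k. (i,j) \<in> F\<^sup>* \<and> isroot F j"])
    also have "\<dots> = (\<Sum>x\<in>{x\<in>MF \<times> UNIV. ((i, j) \<in> (fst x)\<^sup>* \<and> isroot (fst x) j) \<and> w j (snd x) > 0}.
            sg_weight w (fst x) * w j (snd x))"
      by (rule sum_filter_pos[where c="\<lambda>x. w j (snd x)"]) (simp_all add: w0)
    also have "(\<Sum>k\<in>UNIV. w k j * Q$i$k) = (\<Sum>x\<in>MF \<times> UNIV. sg_weight w (fst x) * w (snd x) j *
            (if (i, snd x) \<in> (fst x)\<^sup>* \<and> isroot (fst x) (snd x) then 1 else 0))"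
      unfolding Q_def Qe
      by (rule sum_prod_split[OF finMF, where P="\<lambda>F k. (i,k) \<in> F\<^sup>* \<and> isroot F k"])
    also have "\<dots> = (\<Sum>x\<in>{x\<in>MF \<times> UNIV. ((i, snd x) \<in> (fst x)\<^sup>* \<and> isroot (fst x) (snd x)) \<and> w (snd x) j > 0}.
            sg_weight w (fst x) * w (snd x) j)"
      by (rule sum_filter_pos[where c="\<lambda>x. w (snd x) j"]) (simp_all add: w0)
    finally show "(Q ** L)$i$j = 0"
      using partB[OF w0 wii maxN, where i=i and j=j] by (simp add: MF_def conj_assoc)
  qed
  have rowsQ: "(\<Sum>j\<in>UNIV. Q$i$j) = \<sigma>" for i
  proof -
    have "(\<Sum>j\<in>UNIV. Q$i$j) = (\<Sum>j\<in>UNIV. \<Sum>F\<in>MF. if (i,j) \<in> F\<^sup>* \<and> isroot F j then sg_weight w F else 0)"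
      by (simp add: Q_def Qe)
    also have "\<dots> = (\<Sum>F\<in>MF. \<Sum>j\<in>UNIV. if (i,j) \<in> F\<^sup>* \<and> isroot F j then sg_weight w F else 0)"
      by (rule sum.swap)
    also have "\<dots> = (\<Sum>F\<in>MF. sg_weight w F)"
    proof (rule sum.cong)
      fix F assume "F \<in> MF"
      then have fo: "forest F" by (simp add: MF_def)
      then have fn: "functional F" and ac: "acyclic F" by (auto simp: forest_def)
      obtain r where r: "(i,r) \<in> F\<^sup>*" "isroot F r" using exroot[OF _ ac] by auto
      have "((i,j) \<in> F\<^sup>* \<and> isroot F j) \<longleftrightarrow> j = r" for j
      proof
        assume a: "(i,j) \<in> F\<^sup>* \<and> isroot F j"
        show "j = r" using root_uniq[OF fn conjunct1[OF a] conjunct2[OF a] r(1) r(2)] .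
      next
        assume "j = r" then show "(i,j) \<in> F\<^sup>* \<and> isroot F j" using r by simp
      qed
      then show "(\<Sum>j\<in>UNIV. if (i,j) \<in> F\<^sup>* \<and> isroot F j then sg_weight w F else 0) = sg_weight w F"
        by simp
    qed simp
    finally show ?thesis by (simp add: \<sigma>_def sig)
  qed
  have rows: "\<forall>i. (\<Sum>j\<in>UNIV. J$i$j) = 1"
  proof
    fix i
    have "(\<Sum>j\<in>UNIV. J$i$j) = (1/\<sigma>) * (\<Sum>j\<in>UNIV. Q$i$j)"
      by (simp add: J_def sum_distrib_left)
    then show "(\<Sum>j\<in>UNIV. J$i$j) = 1" using rowsQ spos by simp
  qed
  have supp: "\<forall>i j. J$i$j \<noteq> 0 \<longrightarrow> (i,j) \<in> (arcs w)\<^sup>*"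
  proof (intro allI impI)
    fix i j assume "J$i$j \<noteq> 0"
    then have "Q$i$j \<noteq> 0" by (simp add: J_def)
    then have "(\<Sum>F\<in>MF. if (i,j) \<in> F\<^sup>* \<and> isroot F j then sg_weight w F else 0) \<noteq> 0"
      by (simp add: Q_def Qe)
    have "\<exists>F\<in>MF. (i,j) \<in> F\<^sup>* \<and> isroot F j"
    proof (rule ccontr)
      assume "\<not> (\<exists>F\<in>MF. (i,j) \<in> F\<^sup>* \<and> isroot F j)"
      then have "\<forall>F\<in>MF. (if (i,j) \<in> F\<^sup>* \<and> isroot F j then sg_weight w F else 0) = 0" by auto
      then have "(\<Sum>F\<in>MF. if (i,j) \<in> F\<^sup>* \<and> isroot F j then sg_weight w F else 0) = 0"
        by (rule sum.neutral)
      then show False using \<open>(\<Sum>F\<in>MF. if (i,j) \<in> F\<^sup>* \<and> isroot F j then sg_weight w F else 0) \<noteq> 0\<close> by simp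
    qed
    then obtain F where "F \<in> MF" "(i,j) \<in> F\<^sup>*" by blast
    then show "(i,j) \<in> (arcs w)\<^sup>*" using rtrancl_mono[of F "arcs w"] by (auto simp: MF_def)
  qed
  have LJ: "L ** J = 0" by (simp add: J_def matrix_scalar_ac scalar_matrix_assoc[symmetric] LQ)
  have JL: "J ** L = 0" by (simp add: J_def scalar_matrix_assoc[symmetric] QL)
  have fx: "J *v y = y" if "L *v y = 0" for y
    using fixJ[OF w0 wii _ rows supp] LJ that by (simp add: L_def)
  have "(\<exists>X. is_group_inverse L X) \<and> (\<forall>X. is_group_inverse L X \<longrightarrow> J = mat 1 - L ** X)"
    by (rule abstract_ginv[OF LJ JL fx])
  then show ?thesis by (simp add: J_def \<sigma>_def Q_def L_def N_def)
qed


end
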